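(* Let $f:\mathbb{R}^n\times\mathbb{R}_+\to\mathbb{R}$ be thrice continuously differentiable with $\nabla_{\mathbf{x}\mathbf{x}} f(\mathbf{x},t)\succeq m\mathbf{I}_n$ for some $m>0$ and all $(\mathbf{x},t)$, and suppose that for all $\mathbf{x},t$ and $i\in\{1,\dots,n\}$: $\|\nabla_{\mathbf{x}\mathbf{x}} f\|_2\le C_{xx}$, $\|\nabla_{\mathbf{x}t} f\|_2\le C_{xt}$, $\|\nabla_{\mathbf{x}\mathbf{x}t} f\|_2\le C_{xxt}$, $\|\nabla_{\mathbf{x}tt} f\|_2\le C_{xtt}$, $\|\nabla_{\mathbf{x}\mathbf{x}\mathbf{x}_i} f\|_2\le C_{xxx}$ for given positive constants. Fix $\alpha>0$, $t_0=0$ and $\mathbf{x}_0\in\mathbb{R}^n$. Construct recursively, for $k=0,1,2,\dots$: $\dot{\mathbf{x}}_k=-\nabla_{\mathbf{x}\mathbf{x}}^{-1} f(\mathbf{x}_k,t_k)[\alpha\nabla_{\mathbf{x}} f(\mathbf{x}_k,t_k)+\nabla_{\mathbf{x}t} f(\mathbf{x}_k,t_k)]$; $\mathbf{x}(t)=\mathbf{x}_k+\dot{\mathbf{x}}_k(t-t_k)$ for $t\in[t_k,t_{k+1}]$; $V(t)=\tfrac12\|\nabla_{\mathbf{x}} f(\mathbf{x}(t),t)\|_2^2$; $t_{k+1}$ is the smallest $t>t_k$ with $\phi_k(t)=0$; and $\mathbf{x}_{k+1}=\mathbf{x}_k+\dot{\mathbf{x}}_k(t_{k+1}-t_k)$.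 Here $\phi_k$ is either (for all $k$) $$\phi_k(t)=\tfrac12 a_kb_k(t-t_k)^2+\big(a_k^2+b_k\sqrt{2V(t_k)}\big)(t-t_k)-2\alpha V(t_k)$$ or (for all $k$) $$\phi_k(t)=\tfrac12 b_k^2(t-t_k)^3+\tfrac32\alpha\sqrt{2V(t_k)}\,b_k(t-t_k)^2+\big(\sqrt{2V(t_k)}\,b_k+2\alpha^2V(t_k)\big)(t-t_k)-2\alpha V(t_k),$$ with $a_k=C_{xx}\|\dot{\mathbf{x}}_k\|_2+C_{xt}$ and $b_k=(C_{xxx}\|\dot{\mathbf{x}}_k\|_1+2C_{xxt})\|\dot{\mathbf{x}}_k\|_2+C_{xtt}$. Assume $V(t_k)>0$ for every $k$ (so that each $t_{k+1}$ is well defined). Then for every $\epsilon>0$ there exists a finite $k'(\epsilon)\in\mathbb{Z}_+$ with $V(t_{k'(\epsilon)})<\epsilon$.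
   Context: $\nabla_{\mathbf{x}} f$ is the gradient in $\mathbf{x}$, $\nabla_{\mathbf{x}\mathbf{x}} f$ the Hessian in $\mathbf{x}$, $\nabla_{\mathbf{x}t} f=\frac{\partial}{\partial t}\nabla_{\mathbf{x}} f$, $\nabla_{\mathbf{x}\mathbf{x}t} f=\frac{\partial}{\partial t}\nabla_{\mathbf{x}\mathbf{x}} f$, $\nabla_{\mathbf{x}tt} f=\frac{\partial^2}{\partial t^2}\nabla_{\mathbf{x}} f$, $\nabla_{\mathbf{x}\mathbf{x}\mathbf{x}_i} f=\frac{\partial}{\partial \mathbf{x}_i}\nabla_{\mathbf{x}\mathbf{x}} f$. Matrix norms are spectral norms; $\|\cdot\|_1$ is the vector one-norm. *)

theory Defs
  imports "HOL-Analysis.Analysis"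
begin

text \<open>The derivatives of f are given as bounded linear maps:
  Df p (first derivative), D2f p (second), D3f p (third), where
  D2f p u v is the second directional derivative (first along v, then along u), etc.\<close>

definition C3_on ::
  "('a::real_normed_vector) set \<Rightarrow> ('a \<Rightarrow> real) \<Rightarrow> ('a \<Rightarrow> 'a \<Rightarrow>\<^sub>L real)
   \<Rightarrow> ('a \<Rightarrow> 'a \<Rightarrow>\<^sub>L 'a \<Rightarrow>\<^sub>L real) \<Rightarrow> ('a \<Rightarrow> 'a \<Rightarrow>\<^sub>L 'a \<Rightarrow>\<^sub>L 'a \<Rightarrow>\<^sub>L real) \<Rightarrow> bool" where
  "C3_on D f Df D2f D3f \<longleftrightarrow>
     (\<forall>p\<in>D. (f has_derivative blinfun_apply (Df p)) (at p within D)) \<and>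
     (\<forall>p\<in>D. (Df has_derivative blinfun_apply (D2f p)) (at p within D)) \<and>
     (\<forall>p\<in>D. (D2f has_derivative blinfun_apply (D3f p)) (at p within D)) \<and>
     continuous_on D D3f"

definition ex :: "'n::finite \<Rightarrow> (real^'n) \<times> real" where
  "ex i = (axis i 1, 0)"

definition et :: "(real^'n::finite) \<times> real" where
  "et = (0, 1)"

definition gradx :: "((real^'n::finite) \<times> real \<Rightarrow> ((real^'n) \<times> real) \<Rightarrow>\<^sub>L real) \<Rightarrow> real^'n \<Rightarrow> real \<Rightarrow> real^'n" where
  "gradx Df x t = (\<chi> i. Df (x, t) (ex i))"

definition hessx :: "((real^'n::finite) \<times> real \<Rightarrow> ((real^'n) \<times> real) \<Rightarrow>\<^sub>L ((real^'n) \<times> real) \<Rightarrow>\<^sub>L real)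
    \<Rightarrow> real^'n \<Rightarrow> real \<Rightarrow> real^'n^'n" where
  "hessx D2f x t = (\<chi> i j. D2f (x, t) (ex i) (ex j))"

definition gradxt :: "((real^'n::finite) \<times> real \<Rightarrow> ((real^'n) \<times> real) \<Rightarrow>\<^sub>L ((real^'n) \<times> real) \<Rightarrow>\<^sub>L real)
    \<Rightarrow> real^'n \<Rightarrow> real \<Rightarrow> real^'n" where
  "gradxt D2f x t = (\<chi> i. D2f (x, t) et (ex i))"

definition hessxt :: "((real^'n::finite) \<times> real \<Rightarrow> ((real^'n) \<times> real) \<Rightarrow>\<^sub>L ((real^'n) \<times> real) \<Rightarrow>\<^sub>L ((real^'n) \<times> real) \<Rightarrow>\<^sub>L real)
    \<Rightarrow> real^'n \<Rightarrow> real \<Rightarrow> real^'n^'n" where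
  "hessxt D3f x t = (\<chi> i j. D3f (x, t) et (ex i) (ex j))"

definition gradxtt :: "((real^'n::finite) \<times> real \<Rightarrow> ((real^'n) \<times> real) \<Rightarrow>\<^sub>L ((real^'n) \<times> real) \<Rightarrow>\<^sub>L ((real^'n) \<times> real) \<Rightarrow>\<^sub>L real)
    \<Rightarrow> real^'n \<Rightarrow> real \<Rightarrow> real^'n" where
  "gradxtt D3f x t = (\<chi> i. D3f (x, t) et et (ex i))"

definition hessxxx :: "((real^'n::finite) \<times> real \<Rightarrow> ((real^'n) \<times> real) \<Rightarrow>\<^sub>L ((real^'n) \<times> real) \<Rightarrow>\<^sub>L ((real^'n) \<times> real) \<Rightarrow>\<^sub>L real)
    \<Rightarrow> real^'n \<Rightarrow> real \<Rightarrow> 'n \<Rightarrow> real^'n^'n" where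
  "hessxxx D3f x t l = (\<chi> i j. D3f (x, t) (ex l) (ex i) (ex j))"

definition specnorm :: "real^'n::finite^'n \<Rightarrow> real" where
  "specnorm A = onorm (\<lambda>v. A *v v)"

definition norm1 :: "real^'n::finite \<Rightarrow> real" where
  "norm1 v = (\<Sum>i\<in>UNIV. \<bar>v $ i\<bar>)"

definition xdot :: "((real^'n::finite) \<times> real \<Rightarrow> ((real^'n) \<times> real) \<Rightarrow>\<^sub>L real)
    \<Rightarrow> ((real^'n) \<times> real \<Rightarrow> ((real^'n) \<times> real) \<Rightarrow>\<^sub>L ((real^'n) \<times> real) \<Rightarrow>\<^sub>L real)
    \<Rightarrow> real \<Rightarrow> real^'n \<Rightarrow> real \<Rightarrow> real^'n" where
  "xdot Df D2f \<alpha> x t = - (matrix_inv (hessx D2f x t) *v (\<alpha> *\<^sub>R gradx Df x t + gradxt D2f x t))"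

definition Vf :: "((real^'n::finite) \<times> real \<Rightarrow> ((real^'n) \<times> real) \<Rightarrow>\<^sub>L real) \<Rightarrow> real^'n \<Rightarrow> real \<Rightarrow> real" where
  "Vf Df x t = 1/2 * (norm (gradx Df x t))^2"

definition acoef :: "real \<Rightarrow> real \<Rightarrow> real^'n::finite \<Rightarrow> real" where
  "acoef Cxx Cxt v = Cxx * norm v + Cxt"

definition bcoef :: "real \<Rightarrow> real \<Rightarrow> real \<Rightarrow> real^'n::finite \<Rightarrow> real" where
  "bcoef Cxxx Cxxt Cxtt v = (Cxxx * norm1 v + 2 * Cxxt) * norm v + Cxtt"

text \<open>phi_k(t) with s = t - t_k, V = V(t_k); cubic selects the second form\<close>
definition phi :: "bool \<Rightarrow> real \<Rightarrow> real \<Rightarrow> real \<Rightarrow> real \<Rightarrow> real \<Rightarrow> real" where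
  "phi cubic \<alpha> a b V s =
    (if cubic then 1/2 * b^2 * s^3 + 3/2 * \<alpha> * sqrt (2*V) * b * s^2
                   + (sqrt (2*V) * b + 2 * \<alpha>^2 * V) * s - 2 * \<alpha> * V
     else 1/2 * a * b * s^2 + (a^2 + b * sqrt (2*V)) * s - 2 * \<alpha> * V)"

end

theory Submission
  imports Defs
begin




lemma line_deriv:
  fixes F :: "'a::real_normed_vector \<Rightarrow> real"
  assumes "(F has_derivative F') (at (a + s *\<^sub>R v))"
  shows "((\<lambda>s. F (a + s *\<^sub>R v)) has_derivative (\<lambda>h. h * F' v)) (at s within X)"
proof -
  have l: "linear F'" using assms has_derivative_linear by blast
  have "((\<lambda>s. a + s *\<^sub>R v) has_derivative (\<lambda>h. h *\<^sub>R v)) (at s within X)"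
    by (auto intro!: derivative_eq_intros)
  from has_derivative_in_compose[OF this has_derivative_subset[OF assms subset_UNIV]]
  show ?thesis using linear_scale[OF l] by (simp add: o_def)
qed

lemma schwarz:
  fixes F :: "'a::real_normed_vector \<Rightarrow> real" and F1 :: "'a \<Rightarrow> 'a \<Rightarrow> real"
    and F2 :: "'a \<Rightarrow> 'a \<Rightarrow> 'a \<Rightarrow> real"
  assumes S: "open S" "p \<in> S"
  and d1: "\<And>q. q \<in> S \<Longrightarrow> (F has_derivative F1 q) (at q)"
  and d2: "\<And>q w. q \<in> S \<Longrightarrow> ((\<lambda>q. F1 q w) has_derivative (\<lambda>u. F2 q u w)) (at q)"
  and c: "\<And>w z. continuous (at p) (\<lambda>q. F2 q w z)"
  shows "F2 p u v = F2 p v u"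
proof -
  define \<Delta> where "\<Delta> u v h = F (p + h *\<^sub>R u + h *\<^sub>R v) - F (p + h *\<^sub>R u) - F (p + h *\<^sub>R v) + F p" for u v h
  have key: "\<exists>\<delta>>0. \<forall>h. 0 < h \<and> h < \<delta> \<longrightarrow> \<bar>\<Delta> u v h - h^2 * F2 p u v\<bar> \<le> e * h^2"
    if e: "e > 0" for u v e
  proof -
    obtain d0 where d0: "d0 > 0" "ball p d0 \<subseteq> S" using S open_contains_ball by blast
    obtain d1 where d1': "d1 > 0" "\<And>q. dist q p < d1 \<Longrightarrow> dist (F2 q u v) (F2 p u v) < e"
      using c[of u v] e unfolding continuous_at_eps_delta by blast
    define \<delta> where "\<delta> = min d0 d1 / (norm u + norm v + 1)"
    have npos: "norm u + norm v + 1 > 0" by (simp add: add_nonneg_pos)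
    have dpos: "\<delta> > 0" using d0 d1' npos by (simp add: \<delta>_def)
    have close: "norm (a *\<^sub>R u + b *\<^sub>R v) < min d0 d1" if "0 \<le> a" "a \<le> h" "0 \<le> b" "b \<le> h" "0 < h" "h < \<delta>" for a b h
    proof -
      have "norm (a *\<^sub>R u + b *\<^sub>R v) \<le> a * norm u + b * norm v"
        using norm_triangle_ineq[of "a *\<^sub>R u" "b *\<^sub>R v"] that by simp
      also have "\<dots> \<le> h * (norm u + norm v + 1)"
        using that mult_right_mono[of a h "norm u"] mult_right_mono[of b h "norm v"] by (simp add: distrib_left)
      also have "\<dots> < \<delta> * (norm u + norm v + 1)"
        using that using npos by (intro mult_strict_right_mono) auto
      also have "\<dots> = min d0 d1" unfolding \<delta>_def using npos by simp
      finally show ?thesis .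
    qed
    have inS: "p + a *\<^sub>R u + b *\<^sub>R v \<in> S" if "0 \<le> a" "a \<le> h" "0 \<le> b" "b \<le> h" "0 < h" "h < \<delta>" for a b h
    proof -
      have "dist (p + a *\<^sub>R u + b *\<^sub>R v) p < d0" using close[OF that] by (simp add: dist_norm add.assoc)
      hence "dist p (p + a *\<^sub>R u + b *\<^sub>R v) < d0" by (simp add: dist_commute)
      thus ?thesis using d0 by auto
    qed
    show ?thesis
    proof (intro exI[of _ \<delta>] conjI allI impI dpos)
      fix h assume h: "0 < h \<and> h < \<delta>"
      define \<phi> where "\<phi> s = F (p + h *\<^sub>R u + s *\<^sub>R v) - F (p + s *\<^sub>R v)" for s
      have "\<exists>x\<in>{0..h}. \<phi> h - \<phi> 0 = (\<lambda>k. k * F1 (p + h *\<^sub>R u + x *\<^sub>R v) v - k * F1 (p + x *\<^sub>R v) v) (h - 0)"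
        unfolding \<phi>_def
      proof (rule mvt_very_simple)
        fix x assume x: "0 \<le> x" "x \<le> h"
        have s1: "p + h *\<^sub>R u + x *\<^sub>R v \<in> S" using inS[of h h x] x h by auto
        have s2: "p + x *\<^sub>R v \<in> S" using inS[of 0 h x] x h by auto
        show "((\<lambda>s. F (p + h *\<^sub>R u + s *\<^sub>R v) - F (p + s *\<^sub>R v)) has_derivative
            (\<lambda>k. k * F1 (p + h *\<^sub>R u + x *\<^sub>R v) v - k * F1 (p + x *\<^sub>R v) v)) (at x within {0..h})"
          by (intro has_derivative_diff line_deriv d1 s1 s2)
      qed (use h in auto)
      then obtain \<xi> where \<xi>: "0 \<le> \<xi>" "\<xi> \<le> h"
        "\<phi> h - \<phi> 0 = h * (F1 (p + h *\<^sub>R u + \<xi> *\<^sub>R v) v - F1 (p + \<xi> *\<^sub>R v) v)"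
        by (auto simp: algebra_simps)
      have "\<exists>x\<in>{0..h}. F1 (p + \<xi> *\<^sub>R v + h *\<^sub>R u) v - F1 (p + \<xi> *\<^sub>R v + 0 *\<^sub>R u) v = (\<lambda>k. k * F2 (p + \<xi> *\<^sub>R v + x *\<^sub>R u) u v) (h - 0)"
      proof (rule mvt_very_simple)
        fix x assume x: "0 \<le> x" "x \<le> h"
        have s1: "p + \<xi> *\<^sub>R v + x *\<^sub>R u \<in> S" using inS[of x h \<xi>] x h \<xi> by (auto simp: algebra_simps)
        show "((\<lambda>s. F1 (p + \<xi> *\<^sub>R v + s *\<^sub>R u) v) has_derivative (\<lambda>k. k * F2 (p + \<xi> *\<^sub>R v + x *\<^sub>R u) u v)) (at x within {0..h})"
          by (intro line_deriv[where F="\<lambda>q. F1 q v"] d2 s1)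
      qed (use h in auto)
      then obtain \<eta> where \<eta>: "0 \<le> \<eta>" "\<eta> \<le> h"
        "F1 (p + h *\<^sub>R u + \<xi> *\<^sub>R v) v - F1 (p + \<xi> *\<^sub>R v) v = h * F2 (p + \<eta> *\<^sub>R u + \<xi> *\<^sub>R v) u v"
        by (auto simp: algebra_simps)
      have D: "\<Delta> u v h = h^2 * F2 (p + \<eta> *\<^sub>R u + \<xi> *\<^sub>R v) u v"
        using \<xi>(3) \<eta>(3) unfolding \<phi>_def \<Delta>_def by (simp add: power2_eq_square algebra_simps)
      have "dist (p + \<eta> *\<^sub>R u + \<xi> *\<^sub>R v) p < d1"
        using close[of \<eta> h \<xi>] \<eta> \<xi> h by (simp add: dist_norm add.assoc norm_minus_commute)
      hence "\<bar>F2 (p + \<eta> *\<^sub>R u + \<xi> *\<^sub>R v) u v - F2 p u v\<bar> \<le> e"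
        using d1'(2) by (simp add: dist_real_def less_imp_le)
      hence "h^2 * \<bar>F2 (p + \<eta> *\<^sub>R u + \<xi> *\<^sub>R v) u v - F2 p u v\<bar> \<le> h^2 * e"
        by (intro mult_left_mono) auto
      thus "\<bar>\<Delta> u v h - h^2 * F2 p u v\<bar> \<le> e * h^2"
        unfolding D by (simp add: abs_mult right_diff_distrib[symmetric] mult.commute[of e])
    qed
  qed
  show ?thesis
  proof (rule ccontr)
    assume ne: "F2 p u v \<noteq> F2 p v u"
    define e where "e = \<bar>F2 p u v - F2 p v u\<bar> / 4"
    have e: "e > 0" using ne by (simp add: e_def)
    obtain \<delta>1 where \<delta>1: "\<delta>1 > 0" "\<forall>h. 0 < h \<and> h < \<delta>1 \<longrightarrow> \<bar>\<Delta> u v h - h^2 * F2 p u v\<bar> \<le> e * h^2"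
      using key[OF e] by blast
    obtain \<delta>2 where \<delta>2: "\<delta>2 > 0" "\<forall>h. 0 < h \<and> h < \<delta>2 \<longrightarrow> \<bar>\<Delta> v u h - h^2 * F2 p v u\<bar> \<le> e * h^2"
      using key[OF e] by blast
    define h where "h = min \<delta>1 \<delta>2 / 2"
    have h: "0 < h" "h < \<delta>1" "h < \<delta>2" using \<delta>1 \<delta>2 by (auto simp: h_def)
    have sym: "\<Delta> u v h = \<Delta> v u h" unfolding \<Delta>_def by (simp add: algebra_simps)
    have "\<bar>h^2 * F2 p u v - h^2 * F2 p v u\<bar> \<le> 2 * e * h^2"
      using \<delta>1(2) \<delta>2(2) h sym by fastforce
    hence "h^2 * \<bar>F2 p u v - F2 p v u\<bar> \<le> h^2 * (2 * e)"
      by (metis abs_mult abs_power2 mult.commute mult.left_commute right_diff_distrib)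
    hence "\<bar>F2 p u v - F2 p v u\<bar> \<le> 2 * e" using h by simp
    thus False using e unfolding e_def by simp
  qed
qed




lemma apply_deriv:
  "(G has_derivative G') F \<Longrightarrow> ((\<lambda>q. blinfun_apply (G q) w) has_derivative (\<lambda>u. blinfun_apply (G' u) w)) F"
  by (rule bounded_linear.has_derivative[OF blinfun.bounded_linear_left])

lemma apply_cont:
  "continuous F G \<Longrightarrow> continuous F (\<lambda>q. blinfun_apply (G q) w)"
  by (rule bounded_linear.continuous[OF blinfun.bounded_linear_left])

lemma apply_cont_on:
  "continuous_on S G \<Longrightarrow> continuous_on S (\<lambda>q. blinfun_apply (G q) w)"
  by (rule bounded_linear.continuous_on[OF blinfun.bounded_linear_left])

lemma closure_D: "closure (UNIV \<times> {0<..}) = (UNIV :: ('a::real_normed_vector) set) \<times> {0::real..}"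
  by (simp add: closure_Times)

lemma sym_all:
  fixes f :: "(real^'n::finite) \<times> real \<Rightarrow> real"
    and Df :: "(real^'n) \<times> real \<Rightarrow> ((real^'n) \<times> real) \<Rightarrow>\<^sub>L real"
    and D2f :: "(real^'n) \<times> real \<Rightarrow> ((real^'n) \<times> real) \<Rightarrow>\<^sub>L ((real^'n) \<times> real) \<Rightarrow>\<^sub>L real"
    and D3f :: "(real^'n) \<times> real \<Rightarrow> ((real^'n) \<times> real) \<Rightarrow>\<^sub>L ((real^'n) \<times> real) \<Rightarrow>\<^sub>L ((real^'n) \<times> real) \<Rightarrow>\<^sub>L real"
  assumes C3: "C3_on (UNIV \<times> {0..}) f Df D2f D3f"
  shows sym2: "\<And>p u v. p \<in> UNIV \<times> {0..} \<Longrightarrow> D2f p u v = D2f p v u"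
    and sym3a: "\<And>p w u v. p \<in> UNIV \<times> {0..} \<Longrightarrow> D3f p w u v = D3f p w v u"
    and sym3b: "\<And>p u w v. p \<in> UNIV \<times> {0..} \<Longrightarrow> D3f p u w v = D3f p w u v"
proof -
  define D :: "((real^'n) \<times> real) set" where "D = UNIV \<times> {0..}"
  define S :: "((real^'n) \<times> real) set" where "S = UNIV \<times> {0<..}"
  have oS: "open S" unfolding S_def by (intro open_Times) auto
  have SD: "S \<subseteq> D" unfolding S_def D_def by auto
  have cl: "closure S = D" unfolding S_def D_def by (rule closure_D)
  have df: "\<And>p. p \<in> D \<Longrightarrow> (f has_derivative Df p) (at p within D)"
   and d2: "\<And>p. p \<in> D \<Longrightarrow> (Df has_derivative D2f p) (at p within D)"
   and d3: "\<And>p. p \<in> D \<Longrightarrow> (D2f has_derivative D3f p) (at p within D)"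
   and c3: "continuous_on D D3f"
    using C3 unfolding C3_on_def D_def by auto
  have atS: "(F has_derivative F') (at q)" if "q \<in> S" "(F has_derivative F') (at q within D)" for q F F'
  proof -
    have "(F has_derivative F') (at q within S)" using has_derivative_subset[OF that(2) SD] .
    thus ?thesis using at_within_open[OF that(1) oS] by simp
  qed
  have c2: "continuous_on D D2f" by (rule has_derivative_continuous_on[OF d3])
  have s2S: "D2f q u v = D2f q v u" if q: "q \<in> S" for q u v
  proof -
    have h1: "(f has_derivative Df r) (at r)" if r: "r \<in> S" for r
      using atS[OF r df[of r]] r SD by blast
    have h2: "((\<lambda>q. Df q w) has_derivative (\<lambda>u. D2f r u w)) (at r)" if r: "r \<in> S" for r w
      using apply_deriv[OF atS[OF r d2[of r]]] r SD by blast
    have "isCont D2f q" using has_derivative_continuous[OF atS[OF q d3[of q]]] SD q by blast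
    hence h3: "isCont (\<lambda>q. D2f q w z) q" for w z by (intro apply_cont)
    show ?thesis using schwarz[of S q f "\<lambda>q. blinfun_apply (Df q)" "\<lambda>q u w. D2f q u w", OF oS q h1 h2 h3] by simp
  qed
  show s2: "D2f p u v = D2f p v u" if "p \<in> UNIV \<times> {0..}" for p u v
  proof -
    have "(\<lambda>q. D2f q u v - D2f q v u) p = 0"
    proof (rule continuous_constant_on_closure[where S=S and f="\<lambda>q. D2f q u v - D2f q v u"])
      show "continuous_on (closure S) (\<lambda>q. D2f q u v - D2f q v u)"
        unfolding cl by (intro continuous_on_diff apply_cont_on c2)
    next
      fix r assume "r \<in> S"
      thus "D2f r u v - D2f r v u = 0" using s2S[of r] by simp
    next
      show "p \<in> closure S" using that unfolding cl D_def .
    qed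
    thus ?thesis by simp
  qed
  have s3aS: "D3f q w u v = D3f q w v u" if q: "q \<in> S" for q w u v
  proof -
    have qD: "q \<in> D" using q SD by auto
    have "((\<lambda>q. D2f q u v - D2f q v u) has_derivative (\<lambda>w. D3f q w u v - D3f q w v u)) (at q)"
      by (intro has_derivative_diff apply_deriv atS[OF q d3[OF qD]])
    hence "((\<lambda>q. 0) has_derivative (\<lambda>w. D3f q w u v - D3f q w v u)) (at q)"
    proof (rule has_derivative_transform_within_open[OF _ oS q])
      fix r assume "r \<in> S"
      hence "r \<in> UNIV \<times> {0..}" using SD unfolding D_def by blast
      thus "D2f r u v - D2f r v u = 0" using s2[of r u v] by simp
    qed
    from has_derivative_unique[OF this has_derivative_const]
    have eq: "(\<lambda>w. D3f q w u v - D3f q w v u) = (\<lambda>_. 0)" .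
    show ?thesis using fun_cong[OF eq, of w] by simp
  qed
  show "D3f p w u v = D3f p w v u" if "p \<in> UNIV \<times> {0..}" for p w u v
  proof -
    have "(\<lambda>q. D3f q w u v - D3f q w v u) p = 0"
    proof (rule continuous_constant_on_closure[where S=S and f="\<lambda>q. D3f q w u v - D3f q w v u"])
      show "continuous_on (closure S) (\<lambda>q. D3f q w u v - D3f q w v u)"
        unfolding cl by (intro continuous_on_diff apply_cont_on c3)
    next
      fix r assume "r \<in> S"
      thus "D3f r w u v - D3f r w v u = 0" using s3aS[of r] by simp
    next
      show "p \<in> closure S" using that unfolding cl D_def .
    qed
    thus ?thesis by simp
  qed
  have s3bS: "D3f q u w v = D3f q w u v" if q: "q \<in> S" for q u w v
  proof -
    have h1: "((\<lambda>q. Df q v) has_derivative (\<lambda>u. D2f r u v)) (at r)" if r: "r \<in> S" for r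
      using apply_deriv[OF atS[OF r d2[of r]]] r SD by blast
    have h2: "((\<lambda>q. D2f q w v) has_derivative (\<lambda>u. D3f r u w v)) (at r)" if r: "r \<in> S" for r w
      using apply_deriv[OF apply_deriv[OF atS[OF r d3[of r]]]] r SD by blast
    have "continuous_on S D3f" using continuous_on_subset[OF c3 SD] .
    hence "isCont D3f q" using continuous_on_eq_continuous_at[OF oS] q by blast
    hence h3: "isCont (\<lambda>q. D3f q w z v) q" for w z by (intro apply_cont)
    show ?thesis using schwarz[of S q "\<lambda>q. Df q v" "\<lambda>q u. D2f q u v" "\<lambda>q u w. D3f q u w v", OF oS q h1 h2 h3] by simp
  qed
  show "D3f p u w v = D3f p w u v" if "p \<in> UNIV \<times> {0..}" for p u w v
  proof -
    have "(\<lambda>q. D3f q u w v - D3f q w u v) p = 0"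
    proof (rule continuous_constant_on_closure[where S=S and f="\<lambda>q. D3f q u w v - D3f q w u v"])
      show "continuous_on (closure S) (\<lambda>q. D3f q u w v - D3f q w u v)"
        unfolding cl by (intro continuous_on_diff apply_cont_on c3)
    next
      fix r assume "r \<in> S"
      thus "D3f r u w v - D3f r w u v = 0" using s3bS[of r] by simp
    next
      show "p \<in> closure S" using that unfolding cl D_def .
    qed
    thus ?thesis by simp
  qed
qed




lemma hess_inv:
  fixes H :: "real^'n::finite^'n"
  assumes m: "m > 0" and pd: "\<And>v. v \<bullet> (H *v v) \<ge> m * (norm v)^2"
  shows "H *v (matrix_inv H *v z) = z" and "m * norm (matrix_inv H *v z) \<le> norm z"
proof -
  have lb: "m * norm u \<le> norm (H *v u)" for u
  proof -
    have "m * (norm u)^2 \<le> norm u * norm (H *v u)"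
      using pd[of u] norm_cauchy_schwarz[of u "H *v u"] by linarith
    thus ?thesis
      by (cases "norm u = 0") (auto simp: power2_eq_square mult.assoc[symmetric] mult.commute[of m])
  qed
  have "inj ((*v) H)"
  proof (rule injI)
    fix a b assume "H *v a = H *v b"
    hence "H *v (a - b) = 0" by (simp add: matrix_vector_mult_diff_distrib)
    hence "m * norm (a - b) \<le> 0" using lb[of "a - b"] by simp
    thus "a = b" using m by (simp add: mult_le_0_iff)
  qed
  then obtain B where "B ** H = mat 1" using matrix_left_invertible_injective by blast
  hence inv: "invertible H" using invertible_left_inverse by blast
  hence "H ** matrix_inv H = mat 1 \<and> matrix_inv H ** H = mat 1"
    unfolding matrix_inv_def invertible_def by (rule someI_ex)
  thus eq: "H *v (matrix_inv H *v z) = z" by (simp add: matrix_vector_mul_assoc)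
  show "m * norm (matrix_inv H *v z) \<le> norm z" using lb[of "matrix_inv H *v z"] eq by simp
qed

lemma specnorm_bound: "norm (A *v v) \<le> specnorm A * norm v"
  unfolding specnorm_def by (rule onorm) simp

lemma norm1_le: "norm1 (v::real^'n::finite) \<le> real CARD('n) * norm v"
proof -
  have "norm1 v \<le> (\<Sum>i\<in>(UNIV::'n set). norm v)" unfolding norm1_def
    by (rule sum_mono) (metis component_le_norm_cart real_norm_def)
  thus ?thesis by simp
qed

lemma chi_sum: "(\<chi> i. c i) = (\<Sum>i\<in>UNIV. c i *\<^sub>R axis i (1::real))"
  by (simp add: vec_eq_iff sum_component axis_def if_distrib sum.delta cong: if_cong)

lemma chi_deriv:
  fixes c :: "'n::finite \<Rightarrow> real \<Rightarrow> real"
  assumes "\<And>i. (c i has_real_derivative d i) (at s within X)"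
  shows "((\<lambda>s. \<chi> i. c i s) has_vector_derivative (\<chi> i. d i)) (at s within X)"
proof -
  have "((\<lambda>s. \<Sum>i\<in>UNIV. c i s *\<^sub>R axis i (1::real)) has_vector_derivative (\<Sum>i\<in>UNIV. d i *\<^sub>R axis i 1)) (at s within X)"
  proof (rule has_vector_derivative_sum)
    fix i
    show "((\<lambda>s. c i s *\<^sub>R axis i (1::real)) has_vector_derivative d i *\<^sub>R axis i 1) (at s within X)"
      using has_vector_derivative_scaleR[OF assms[of i] has_vector_derivative_const[of "axis i (1::real)"]] by simp
  qed
  thus ?thesis by (simp add: chi_sum)
qed



lemma seg_deriv:
  fixes G :: "(real^'n::finite) \<times> real \<Rightarrow> 'b::real_normed_vector"
  assumes "\<And>p. p \<in> D \<Longrightarrow> (G has_derivative G' p) (at p within D)"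
    and "\<And>s. s \<in> X \<Longrightarrow> (x0 + s *\<^sub>R v, t0 + s) \<in> D" and "s \<in> X"
  shows "((\<lambda>s. G (x0 + s *\<^sub>R v, t0 + s)) has_derivative (\<lambda>y. y *\<^sub>R G' (x0 + s *\<^sub>R v, t0 + s) (v, 1))) (at s within X)"
proof -
  have l: "((\<lambda>s. (x0 + s *\<^sub>R v, t0 + s)) has_derivative (\<lambda>y. (y *\<^sub>R v, y))) (at s within X)"
    by (intro has_derivative_Pair derivative_eq_intros) auto
  have lin: "linear (G' (x0 + s *\<^sub>R v, t0 + s))"
    using assms(1)[OF assms(2)[OF assms(3)]] has_derivative_linear by blast
  have "((\<lambda>s. G (x0 + s *\<^sub>R v, t0 + s)) has_derivative (\<lambda>y. G' (x0 + s *\<^sub>R v, t0 + s) (y *\<^sub>R v, y))) (at s within X)"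
    by (rule has_derivative_in_compose2[OF assms(1) _ assms(3) l]) (use assms(2) in blast)+
  moreover have "G' (x0 + s *\<^sub>R v, t0 + s) (y *\<^sub>R v, y) = y *\<^sub>R G' (x0 + s *\<^sub>R v, t0 + s) (v, 1)" for y
    using linear_scale[OF lin, of y "(v,1)"] by simp
  ultimately show ?thesis by simp
qed

lemma norm_growth:
  fixes F :: "real \<Rightarrow> 'a::real_inner"
  assumes ab: "a \<le> b"
    and dF: "\<And>s. s \<in> {a..b} \<Longrightarrow> (F has_vector_derivative F' s) (at s within {a..b})"
    and d\<beta>: "\<And>s. s \<in> {a..b} \<Longrightarrow> (\<beta> has_real_derivative \<beta>' s) (at s within {a..b})"
    and bnd: "\<And>s. s \<in> {a..b} \<Longrightarrow> norm (F' s) \<le> \<beta>' s"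
  shows "norm (F b - F a) \<le> \<beta> b - \<beta> a"
proof -
  define u where "u = F b - F a"
  have "\<exists>x\<in>{a..b}. \<beta> b - \<beta> a = (\<lambda>h. \<beta>' x * h) (b - a)"
  proof (rule mvt_very_simple[OF ab])
    fix x assume "a \<le> x" "x \<le> b"
    thus "(\<beta> has_derivative (\<lambda>h. \<beta>' x * h)) (at x within {a..b})"
      using d\<beta>[of x] by (simp add: has_field_derivative_def)
  qed
  then obtain x where x: "x \<in> {a..b}" "\<beta> b - \<beta> a = \<beta>' x * (b - a)" by auto
  have "\<beta>' x \<ge> 0" using bnd[OF x(1)] norm_ge_zero order_trans by blast
  hence bpos: "\<beta> b - \<beta> a \<ge> 0" using x(2) ab by simp
  have "\<exists>x\<in>{a..b}. (u \<bullet> F b - norm u * \<beta> b) - (u \<bullet> F a - norm u * \<beta> a) = (\<lambda>h. u \<bullet> (h *\<^sub>R F' x) - norm u * (\<beta>' x * h)) (b - a)"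
  proof (rule mvt_very_simple[OF ab])
    fix x assume x: "a \<le> x" "x \<le> b"
    have 1: "(F has_derivative (\<lambda>h. h *\<^sub>R F' x)) (at x within {a..b})" using dF[of x] x
      by (simp add: has_vector_derivative_def)
    have 2: "(\<beta> has_derivative (\<lambda>h. \<beta>' x * h)) (at x within {a..b})"
      using d\<beta>[of x] x by (simp add: has_field_derivative_def)
    show "((\<lambda>s. u \<bullet> F s - norm u * \<beta> s) has_derivative (\<lambda>h. u \<bullet> (h *\<^sub>R F' x) - norm u * (\<beta>' x * h))) (at x within {a..b})"
      by (intro has_derivative_diff has_derivative_mult_right has_derivative_inner_right 1 2)
  qed
  then obtain y where y0: "y \<in> {a..b}" "(u \<bullet> F b - norm u * \<beta> b) - (u \<bullet> F a - norm u * \<beta> a) = u \<bullet> ((b - a) *\<^sub>R F' y) - norm u * (\<beta>' y * (b - a))"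
    by blast
  have y: "y \<in> {a..b}" "(u \<bullet> F b - norm u * \<beta> b) - (u \<bullet> F a - norm u * \<beta> a) = (b - a) * (u \<bullet> F' y - norm u * \<beta>' y)"
    using y0 by (simp_all add: right_diff_distrib mult.commute mult.left_commute)
  have "u \<bullet> F' y \<le> norm u * norm (F' y)" by (rule norm_cauchy_schwarz)
  also have "\<dots> \<le> norm u * \<beta>' y" using bnd[OF y(1)] by (simp add: mult_left_mono)
  finally have "(b - a) * (u \<bullet> F' y - norm u * \<beta>' y) \<le> 0" using ab by (simp add: mult_nonneg_nonpos)
  hence "u \<bullet> u \<le> norm u * (\<beta> b - \<beta> a)" using y(2) unfolding u_def by (simp add: algebra_simps inner_diff_right)
  hence "norm u * norm u \<le> norm u * (\<beta> b - \<beta> a)" by (simp add: power2_eq_square[symmetric] dot_square_norm)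
  hence "norm u \<le> \<beta> b - \<beta> a" using bpos by (cases "norm u = 0") auto
  thus ?thesis unfolding u_def .
qed




lemma quad_ineq:
  fixes g0 d e G :: "'a::real_inner"
  assumes G: "G = -(\<alpha> *\<^sub>R g0) + e" and d: "norm d \<le> a * s" and e: "norm e \<le> b * s"
    and Gb: "norm G \<le> a" and s: "s \<ge> 0" and a: "a \<ge> 0" and b: "b \<ge> 0"
  shows "(g0 + d) \<bullet> G \<le> 1/2 * a * b * s^2 + (a^2 + b * norm g0) * s - \<alpha> * (norm g0)^2"
proof -
  have as: "0 \<le> a * s" using a s by simp
  have 1: "d \<bullet> G \<le> a * s * a"
    using order_trans[OF norm_cauchy_schwarz[of d G] mult_mono[OF d Gb as norm_ge_zero]] .
  have 2: "g0 \<bullet> e \<le> norm g0 * (b * s)"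
    using order_trans[OF norm_cauchy_schwarz[of g0 e] mult_left_mono[OF e norm_ge_zero]] .
  have 3: "g0 \<bullet> G = - \<alpha> * (norm g0)^2 + g0 \<bullet> e"
    unfolding G by (simp add: inner_add_right inner_diff_right power2_norm_eq_inner)
  have 4: "0 \<le> 1/2 * a * b * s^2" using a b s by simp
  have "(g0 + d) \<bullet> G = g0 \<bullet> G + d \<bullet> G" by (simp add: inner_add_left)
  also have "\<dots> \<le> - \<alpha> * (norm g0)^2 + norm g0 * (b * s) + a * s * a" using 1 2 3 by linarith
  also have "\<dots> = (a^2 + b * norm g0) * s - \<alpha> * (norm g0)^2" by (simp add: algebra_simps power2_eq_square)
  finally show ?thesis using 4 by linarith
qed

lemma cubic_ineq:
  fixes g0 R e :: "'a::real_inner"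
  assumes R: "norm R \<le> b * s^2 / 2" and e: "norm e \<le> b * s"
    and s: "s \<ge> 0" and al: "\<alpha> > 0" and b: "b \<ge> 0"
  shows "((1 - \<alpha> * s) *\<^sub>R g0 + R) \<bullet> (-(\<alpha> *\<^sub>R g0) + e) \<le>
     1/2 * b^2 * s^3 + 3/2 * \<alpha> * norm g0 * b * s^2 + (norm g0 * b + \<alpha>^2 * (norm g0)^2) * s - \<alpha> * (norm g0)^2"
proof -
  have expand: "((1 - \<alpha> * s) *\<^sub>R g0 + R) \<bullet> (-(\<alpha> *\<^sub>R g0) + e) =
      - \<alpha> * (1 - \<alpha> * s) * (norm g0)^2 + (1 - \<alpha> * s) * (g0 \<bullet> e) - \<alpha> * (R \<bullet> g0) + R \<bullet> e"
    by (simp add: inner_add_left inner_add_right power2_norm_eq_inner inner_commute algebra_simps)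
  have ge: "\<bar>g0 \<bullet> e\<bar> \<le> norm g0 * (b * s)"
    using order_trans[OF Cauchy_Schwarz_ineq2[of g0 e] mult_left_mono[OF e norm_ge_zero]] .
  have as: "0 \<le> \<alpha> * s" using al s by simp
  have T2: "(1 - \<alpha> * s) * (g0 \<bullet> e) \<le> (1 + \<alpha> * s) * (norm g0 * (b * s))"
  proof -
    have "(1 - \<alpha> * s) * (g0 \<bullet> e) \<le> \<bar>(1 - \<alpha> * s) * (g0 \<bullet> e)\<bar>" by (rule abs_ge_self)
    also have "\<dots> = \<bar>1 - \<alpha> * s\<bar> * \<bar>g0 \<bullet> e\<bar>" by (rule abs_mult)
    also have "\<dots> \<le> (1 + \<alpha> * s) * (norm g0 * (b * s))"
    proof (rule mult_mono)
      show "\<bar>1 - \<alpha> * s\<bar> \<le> 1 + \<alpha> * s" using as by linarith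
      show "\<bar>g0 \<bullet> e\<bar> \<le> norm g0 * (b * s)" by (rule ge)
      show "0 \<le> 1 + \<alpha> * s" using as by linarith
    qed simp
    finally show ?thesis .
  qed
  have Rg: "\<bar>R \<bullet> g0\<bar> \<le> b * s^2 / 2 * norm g0"
    using order_trans[OF Cauchy_Schwarz_ineq2[of R g0] mult_right_mono[OF R norm_ge_zero]] .
  have T3: "- \<alpha> * (R \<bullet> g0) \<le> \<alpha> * (b * s^2 / 2 * norm g0)"
  proof -
    have "- (R \<bullet> g0) \<le> b * s^2 / 2 * norm g0" using Rg by linarith
    hence "\<alpha> * (- (R \<bullet> g0)) \<le> \<alpha> * (b * s^2 / 2 * norm g0)" using al by (intro mult_left_mono) auto
    thus ?thesis by simp
  qed
  have bs2: "0 \<le> b * s^2 / 2" using b by simp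
  have T4: "R \<bullet> e \<le> b * s^2 / 2 * (b * s)"
    using order_trans[OF norm_cauchy_schwarz[of R e] mult_mono[OF R e bs2 norm_ge_zero]] .
  have "((1 - \<alpha> * s) *\<^sub>R g0 + R) \<bullet> (-(\<alpha> *\<^sub>R g0) + e) \<le>
      - \<alpha> * (1 - \<alpha> * s) * (norm g0)^2 + (1 + \<alpha> * s) * (norm g0 * (b * s)) + \<alpha> * (b * s^2 / 2 * norm g0) + b * s^2 / 2 * (b * s)"
    unfolding expand using T2 T3 T4 by linarith
  also have "\<dots> = 1/2 * b^2 * s^3 + 3/2 * \<alpha> * norm g0 * b * s^2 + (norm g0 * b + \<alpha>^2 * (norm g0)^2) * s - \<alpha> * (norm g0)^2"
    by (simp add: algebra_simps power2_eq_square power3_eq_cube)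
  finally show ?thesis .
qed




lemma decomp: "(v::real^'n::finite, 1::real) = (\<Sum>j\<in>UNIV. v$j *\<^sub>R ex j) + et"
proof -
  have "(\<Sum>j\<in>UNIV. v$j *\<^sub>R axis j (1::real)) = v"
    using basis_expansion[of v] by (simp add: scalar_mult_eq_scaleR)
  thus ?thesis by (simp add: prod_eq_iff fst_sum snd_sum ex_def et_def)
qed

lemma blin_decomp: "blinfun_apply (B :: ((real^'n::finite)\<times>real) \<Rightarrow>\<^sub>L 'b::real_normed_vector) (v,1) = (\<Sum>j\<in>UNIV. v$j *\<^sub>R B (ex j)) + B et"
  by (subst decomp) (simp add: blinfun.add_right blinfun.sum_right blinfun.scaleR_right)

lemma G1id:
  fixes D2f :: "(real^'n::finite) \<times> real \<Rightarrow> ((real^'n) \<times> real) \<Rightarrow>\<^sub>L ((real^'n) \<times> real) \<Rightarrow>\<^sub>L real"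
  assumes sym2: "\<And>u w. D2f (x,t) u w = D2f (x,t) w u"
  shows "(\<chi> i. D2f (x,t) (v,1) (ex i)) = hessx D2f x t *v v + gradxt D2f x t"
proof -
  have "D2f (x,t) (v,1) (ex i) = (hessx D2f x t *v v) $ i + gradxt D2f x t $ i" for i
  proof -
    have "D2f (x,t) (v,1) (ex i) = (\<Sum>j\<in>UNIV. v$j * D2f (x,t) (ex j) (ex i)) + D2f (x,t) et (ex i)"
      by (simp add: blin_decomp blinfun.add_left blinfun.sum_left blinfun.scaleR_left)
    also have "\<dots> = (\<Sum>j\<in>UNIV. D2f (x,t) (ex i) (ex j) * v$j) + D2f (x,t) et (ex i)"
      by (simp add: sym2[of "ex i"] mult.commute)
    finally show ?thesis by (simp add: matrix_vector_mult_def hessx_def gradxt_def)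
  qed
  thus ?thesis by (simp add: vec_eq_iff)
qed

lemma G2id:
  fixes D3f :: "(real^'n::finite) \<times> real \<Rightarrow> ((real^'n) \<times> real) \<Rightarrow>\<^sub>L ((real^'n) \<times> real) \<Rightarrow>\<^sub>L ((real^'n) \<times> real) \<Rightarrow>\<^sub>L real"
  assumes s3a: "\<And>w u z. D3f (x,t) w u z = D3f (x,t) w z u"
    and s3b: "\<And>u w z. D3f (x,t) u w z = D3f (x,t) w u z"
  shows "(\<chi> i. D3f (x,t) (v,1) (v,1) (ex i)) =
     (\<Sum>l\<in>UNIV. v$l *\<^sub>R (hessxxx D3f x t l *v v)) + 2 *\<^sub>R (hessxt D3f x t *v v) + gradxtt D3f x t"
proof -
  let ?T = "\<lambda>a b c. D3f (x,t) a b c"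
  have "?T (v,1) (v,1) (ex i) = (\<Sum>l\<in>UNIV. v$l *\<^sub>R (hessxxx D3f x t l *v v)) $ i + (2 *\<^sub>R (hessxt D3f x t *v v)) $ i + gradxtt D3f x t $ i" for i
  proof -
    have e1: "?T (v,1) (v,1) (ex i) = (\<Sum>l\<in>UNIV. v$l * ?T (ex l) (v,1) (ex i)) + ?T et (v,1) (ex i)"
      by (subst blin_decomp) (simp add: blinfun.add_left blinfun.sum_left blinfun.scaleR_left)
    have e2: "?T a (v,1) (ex i) = (\<Sum>j\<in>UNIV. v$j * ?T a (ex j) (ex i)) + ?T a et (ex i)" for a
      by (subst blin_decomp) (simp add: blinfun.add_left blinfun.sum_left blinfun.scaleR_left)
    have A: "(\<Sum>l\<in>UNIV. v$l * ?T (ex l) (v,1) (ex i)) =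
       (\<Sum>l\<in>UNIV. v$l * (\<Sum>j\<in>UNIV. ?T (ex l) (ex i) (ex j) * v$j)) + (\<Sum>l\<in>UNIV. ?T et (ex i) (ex l) * v$l)"
      unfolding e2 by (simp add: distrib_left sum.distrib s3a[of "ex _" "ex i"] mult.commute
          s3b[of "ex _" et] s3a[of et _ "ex i"])
    have B: "?T et (v,1) (ex i) = (\<Sum>j\<in>UNIV. ?T et (ex i) (ex j) * v$j) + ?T et et (ex i)"
      unfolding e2 by (simp add: s3a[of et _ "ex i"] mult.commute)
    show ?thesis unfolding e1 A B
      by (simp add: matrix_vector_mult_def hessxxx_def hessxt_def gradxtt_def sum_component)
  qed
  thus ?thesis by (simp add: vec_eq_iff)
qed




lemma segment:
  fixes f :: "(real^'n::finite) \<times> real \<Rightarrow> real"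
    and Df :: "(real^'n) \<times> real \<Rightarrow> ((real^'n) \<times> real) \<Rightarrow>\<^sub>L real"
    and D2f :: "(real^'n) \<times> real \<Rightarrow> ((real^'n) \<times> real) \<Rightarrow>\<^sub>L ((real^'n) \<times> real) \<Rightarrow>\<^sub>L real"
    and D3f :: "(real^'n) \<times> real \<Rightarrow> ((real^'n) \<times> real) \<Rightarrow>\<^sub>L ((real^'n) \<times> real) \<Rightarrow>\<^sub>L ((real^'n) \<times> real) \<Rightarrow>\<^sub>L real"
    and m Cxx Cxt Cxxt Cxtt Cxxx \<alpha> :: real
    and x0 :: "real^'n"
  assumes C3: "C3_on (UNIV \<times> {0..}) f Df D2f D3f"
    and m_pos: "m > 0"
    and strong_conv: "\<And>x t v. t \<ge> 0 \<Longrightarrow> v \<bullet> (hessx D2f x t *v v) \<ge> m * (norm v)^2"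
    and consts_pos: "Cxx > 0" "Cxt > 0" "Cxxt > 0" "Cxtt > 0" "Cxxx > 0"
    and bnd_xx: "\<And>x t. t \<ge> 0 \<Longrightarrow> specnorm (hessx D2f x t) \<le> Cxx"
    and bnd_xt: "\<And>x t. t \<ge> 0 \<Longrightarrow> norm (gradxt D2f x t) \<le> Cxt"
    and bnd_xxt: "\<And>x t. t \<ge> 0 \<Longrightarrow> specnorm (hessxt D3f x t) \<le> Cxxt"
    and bnd_xtt: "\<And>x t. t \<ge> 0 \<Longrightarrow> norm (gradxtt D3f x t) \<le> Cxtt"
    and bnd_xxx: "\<And>x t i. t \<ge> 0 \<Longrightarrow> specnorm (hessxxx D3f x t i) \<le> Cxxx"
    and alpha_pos: "\<alpha> > 0"
    and t0: "0 \<le> t0" and s: "0 \<le> s" "s \<le> T"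
  shows "\<exists>V'. ((\<lambda>s. Vf Df (x0 + s *\<^sub>R xdot Df D2f \<alpha> x0 t0) (t0 + s)) has_real_derivative V') (at s within {0..T})
           \<and> V' \<le> phi cubic \<alpha> (acoef Cxx Cxt (xdot Df D2f \<alpha> x0 t0)) (bcoef Cxxx Cxxt Cxtt (xdot Df D2f \<alpha> x0 t0)) (Vf Df x0 t0) s"
proof -
  define v where "v = xdot Df D2f \<alpha> x0 t0"
  define D :: "((real^'n) \<times> real) set" where "D = UNIV \<times> {0..}"
  define g where "g r = gradx Df (x0 + r *\<^sub>R v) (t0 + r)" for r
  define G1 where "G1 r = (\<chi> i. D2f (x0 + r *\<^sub>R v, t0 + r) (v,1) (ex i))" for r
  define G2 where "G2 r = (\<chi> i. D3f (x0 + r *\<^sub>R v, t0 + r) (v,1) (v,1) (ex i))" for r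
  define a where "a = acoef Cxx Cxt v"
  define b where "b = bcoef Cxxx Cxxt Cxtt v"
  have inD: "\<And>r. r \<in> {0..T} \<Longrightarrow> (x0 + r *\<^sub>R v, t0 + r) \<in> D" using t0 by (auto simp: D_def)
  have d2: "\<And>p. p \<in> D \<Longrightarrow> (Df has_derivative D2f p) (at p within D)"
   and d3: "\<And>p. p \<in> D \<Longrightarrow> (D2f has_derivative D3f p) (at p within D)"
    using C3 unfolding C3_on_def D_def by auto
  have dg: "(g has_vector_derivative G1 r) (at r within {0..T})" if r: "r \<in> {0..T}" for r
    unfolding g_def gradx_def G1_def
  proof (rule chi_deriv)
    fix i
    have "((\<lambda>r. Df (x0 + r *\<^sub>R v, t0 + r) (ex i)) has_derivative (\<lambda>y. y *\<^sub>R D2f (x0 + r *\<^sub>R v, t0 + r) (v,1) (ex i))) (at r within {0..T})"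
      by (rule seg_deriv[where G = "\<lambda>p. Df p (ex i)" and G' = "\<lambda>p h. D2f p h (ex i)" and D = D])
        (use r in \<open>auto intro: apply_deriv d2 inD\<close>)
    thus "((\<lambda>r. Df (x0 + r *\<^sub>R v, t0 + r) (ex i)) has_real_derivative D2f (x0 + r *\<^sub>R v, t0 + r) (v,1) (ex i)) (at r within {0..T})"
      by (simp add: has_real_derivative_iff_has_vector_derivative has_vector_derivative_def)
  qed
  have dG1: "(G1 has_vector_derivative G2 r) (at r within {0..T})" if r: "r \<in> {0..T}" for r
    unfolding G1_def G2_def
  proof (rule chi_deriv)
    fix i
    have "((\<lambda>r. D2f (x0 + r *\<^sub>R v, t0 + r) (v,1) (ex i)) has_derivative (\<lambda>y. y *\<^sub>R D3f (x0 + r *\<^sub>R v, t0 + r) (v,1) (v,1) (ex i))) (at r within {0..T})"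
      proof (rule seg_deriv[where G = "\<lambda>p. D2f p (v,1) (ex i)" and G' = "\<lambda>p h. D3f p h (v,1) (ex i)" and D = D])
      show "((\<lambda>p. D2f p (v,1) (ex i)) has_derivative (\<lambda>h. D3f p h (v,1) (ex i))) (at p within D)" if "p \<in> D" for p
        by (intro apply_deriv d3 that)
    qed (use r inD in auto)
    thus "((\<lambda>r. D2f (x0 + r *\<^sub>R v, t0 + r) (v,1) (ex i)) has_real_derivative D3f (x0 + r *\<^sub>R v, t0 + r) (v,1) (v,1) (ex i)) (at r within {0..T})"
      by (simp add: has_real_derivative_iff_has_vector_derivative has_vector_derivative_def)
  qed
  note syms = sym_all[OF C3]
  have G1eq: "G1 r = hessx D2f (x0 + r *\<^sub>R v) (t0 + r) *v v + gradxt D2f (x0 + r *\<^sub>R v) (t0 + r)" if r: "r \<in> {0..T}" for r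
    unfolding G1_def by (rule G1id) (use syms(1) r t0 in auto)
  have G2eq: "G2 r = (\<Sum>l\<in>UNIV. v$l *\<^sub>R (hessxxx D3f (x0 + r *\<^sub>R v) (t0 + r) l *v v)) + 2 *\<^sub>R (hessxt D3f (x0 + r *\<^sub>R v) (t0 + r) *v v) + gradxtt D3f (x0 + r *\<^sub>R v) (t0 + r)" if r: "r \<in> {0..T}" for r
    unfolding G2_def by (rule G2id) (use syms(2,3) r t0 in auto)

  have cpos: "Cxx > 0" "Cxt > 0" "Cxxt > 0" "Cxtt > 0" "Cxxx > 0" using consts_pos by auto
  have a0: "a \<ge> 0" unfolding a_def acoef_def using cpos by simp
  have n1: "norm1 v \<ge> 0" unfolding norm1_def by (simp add: sum_nonneg)
  have b0: "b \<ge> 0" unfolding b_def bcoef_def using cpos n1 by simp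
  have G1bnd: "norm (G1 r) \<le> a" if r: "r \<in> {0..T}" for r
  proof -
    have tr: "t0 + r \<ge> 0" using r t0 by simp
    have "norm (G1 r) \<le> norm (hessx D2f (x0 + r *\<^sub>R v) (t0 + r) *v v) + norm (gradxt D2f (x0 + r *\<^sub>R v) (t0 + r))"
      unfolding G1eq[OF r] by (rule norm_triangle_ineq)
    also have "\<dots> \<le> Cxx * norm v + Cxt"
      using order_trans[OF specnorm_bound mult_right_mono[OF bnd_xx[OF tr] norm_ge_zero]] bnd_xt[OF tr]
      by (intro add_mono) auto
    finally show ?thesis unfolding a_def acoef_def .
  qed
  have G2bnd: "norm (G2 r) \<le> b" if r: "r \<in> {0..T}" for r
  proof -
    have tr: "t0 + r \<ge> 0" using r t0 by simp
    let ?x = "x0 + r *\<^sub>R v" and ?t = "t0 + r"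
    have 1: "norm (\<Sum>l\<in>UNIV. v$l *\<^sub>R (hessxxx D3f ?x ?t l *v v)) \<le> Cxxx * norm1 v * norm v"
    proof -
      have "norm (\<Sum>l\<in>UNIV. v$l *\<^sub>R (hessxxx D3f ?x ?t l *v v)) \<le> (\<Sum>l\<in>UNIV. norm (v$l *\<^sub>R (hessxxx D3f ?x ?t l *v v)))"
        by (rule norm_sum)
      also have "\<dots> \<le> (\<Sum>l\<in>UNIV. \<bar>v$l\<bar> * (Cxxx * norm v))"
      proof (rule sum_mono)
        fix l
        have "norm (hessxxx D3f ?x ?t l *v v) \<le> Cxxx * norm v"
          using order_trans[OF specnorm_bound mult_right_mono[OF bnd_xxx[OF tr] norm_ge_zero]] .
        thus "norm (v$l *\<^sub>R (hessxxx D3f ?x ?t l *v v)) \<le> \<bar>v$l\<bar> * (Cxxx * norm v)"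
          by (simp add: mult_left_mono)
      qed
      also have "\<dots> = Cxxx * norm1 v * norm v" unfolding norm1_def by (simp add: algebra_simps sum_distrib_left)
      finally show ?thesis .
    qed
    have 2: "norm (2 *\<^sub>R (hessxt D3f ?x ?t *v v)) \<le> 2 * (Cxxt * norm v)"
      using order_trans[OF specnorm_bound mult_right_mono[OF bnd_xxt[OF tr] norm_ge_zero]] by simp
    have 3: "norm (gradxtt D3f ?x ?t) \<le> Cxtt" using bnd_xtt[OF tr] .
    have "norm (G2 r) \<le> Cxxx * norm1 v * norm v + 2 * (Cxxt * norm v) + Cxtt"
      unfolding G2eq[OF r] using 1 2 3 norm_triangle_ineq order_trans add_mono by (smt (verit))
    thus ?thesis unfolding b_def bcoef_def by (simp add: algebra_simps)
  qed
  define g0 where "g0 = g 0"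
  have G10: "G1 0 = - (\<alpha> *\<^sub>R g0)"
  proof -
    let ?H = "hessx D2f x0 t0"
    have pd: "\<And>u. u \<bullet> (?H *v u) \<ge> m * (norm u)^2" using strong_conv t0 by blast
    have v: "v = - (matrix_inv ?H *v (\<alpha> *\<^sub>R g0 + gradxt D2f x0 t0))"
      unfolding v_def xdot_def g0_def g_def by simp
    have "?H *v v = - (\<alpha> *\<^sub>R g0 + gradxt D2f x0 t0)"
    proof -
      have mneg: "?H *v (- y) = - (?H *v y)" for y by (simp add: vec_eq_iff matrix_vector_mult_def sum_negf)
      show ?thesis unfolding v mneg using hess_inv(1)[OF m_pos pd] by simp
    qed
    thus ?thesis using G1eq[of 0] s by simp
  qed
  have E1: "norm (G1 r - G1 0) \<le> b * r" if r: "r \<in> {0..T}" for r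
  proof -
    have "norm (G1 r - G1 0) \<le> b * r - b * 0"
    proof (rule norm_growth[where F' = G2 and \<beta>' = "\<lambda>_. b"])
      show "0 \<le> r" using r by simp
      fix q assume q: "q \<in> {0..r}"
      hence qT: "q \<in> {0..T}" using r by auto
      show "(G1 has_vector_derivative G2 q) (at q within {0..r})"
        using has_vector_derivative_within_subset[OF dG1[OF qT]] r by auto
      show "((\<lambda>r. b * r) has_real_derivative b) (at q within {0..r})"
        by (auto intro!: derivative_eq_intros)
      show "norm (G2 q) \<le> b" using G2bnd[OF qT] .
    qed
    thus ?thesis by simp
  qed
  have E2: "norm (g r - g 0) \<le> a * r" if r: "r \<in> {0..T}" for r
  proof -
    have "norm (g r - g 0) \<le> a * r - a * 0"
    proof (rule norm_growth[where F' = G1 and \<beta>' = "\<lambda>_. a"])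
      show "0 \<le> r" using r by simp
      fix q assume q: "q \<in> {0..r}"
      hence qT: "q \<in> {0..T}" using r by auto
      show "(g has_vector_derivative G1 q) (at q within {0..r})"
        using has_vector_derivative_within_subset[OF dg[OF qT]] r by auto
      show "((\<lambda>r. a * r) has_real_derivative a) (at q within {0..r})"
        by (auto intro!: derivative_eq_intros)
      show "norm (G1 q) \<le> a" using G1bnd[OF qT] .
    qed
    thus ?thesis by simp
  qed
  have E3: "norm (g r - g0 - r *\<^sub>R G1 0) \<le> b * r^2 / 2" if r: "r \<in> {0..T}" for r
  proof -
    have "norm ((g r - r *\<^sub>R G1 0) - (g 0 - 0 *\<^sub>R G1 0)) \<le> b * r^2 / 2 - b * 0^2 / 2"
    proof (rule norm_growth[where F' = "\<lambda>q. G1 q - G1 0" and \<beta>' = "\<lambda>q. b * q"])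
      show "0 \<le> r" using r by simp
      fix q assume q: "q \<in> {0..r}"
      hence qT: "q \<in> {0..T}" using r by auto
      show "((\<lambda>q. g q - q *\<^sub>R G1 0) has_vector_derivative G1 q - G1 0) (at q within {0..r})"
        using has_vector_derivative_within_subset[OF dg[OF qT]] r
        by (auto intro!: derivative_eq_intros)
      show "((\<lambda>r. b * r^2 / 2) has_real_derivative b * q) (at q within {0..r})"
        by (auto intro!: derivative_eq_intros)
      show "norm (G1 q - G1 0) \<le> b * q" using E1[OF qT] .
    qed
    thus ?thesis by (simp add: g0_def algebra_simps)
  qed
  have sT: "s \<in> {0..T}" using s by simp
  have Veq: "Vf Df (x0 + r *\<^sub>R xdot Df D2f \<alpha> x0 t0) (t0 + r) = 1/2 * (g r \<bullet> g r)" for r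
    unfolding Vf_def g_def v_def by (simp add: power2_norm_eq_inner)
  have dV: "((\<lambda>r. 1/2 * (g r \<bullet> g r)) has_real_derivative 1/2 * (g s \<bullet> G1 s + G1 s \<bullet> g s)) (at s within {0..T})"
  proof -
    have "((\<lambda>r. g r \<bullet> g r) has_vector_derivative (g s \<bullet> G1 s + G1 s \<bullet> g s)) (at s within {0..T})"
      by (rule bounded_bilinear.has_vector_derivative[OF bounded_bilinear_inner dg[OF sT] dg[OF sT]])
    hence "((\<lambda>r. g r \<bullet> g r) has_real_derivative (g s \<bullet> G1 s + G1 s \<bullet> g s)) (at s within {0..T})"
      by (simp add: has_real_derivative_iff_has_vector_derivative)
    thus ?thesis by (rule DERIV_cmult)
  qed
  have V0: "Vf Df x0 t0 = 1/2 * (norm g0)^2" unfolding Vf_def g0_def g_def by simp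
  have sq: "sqrt (2 * Vf Df x0 t0) = norm g0" unfolding V0 by simp
  have Vd: "1/2 * (g s \<bullet> G1 s + G1 s \<bullet> g s) = g s \<bullet> G1 s" by (simp add: inner_commute)
  have bound: "g s \<bullet> G1 s \<le> phi cubic \<alpha> a b (Vf Df x0 t0) s"
  proof (cases cubic)
    case True
    have gs: "g s = (1 - \<alpha> * s) *\<^sub>R g0 + (g s - g0 - s *\<^sub>R G1 0)"
      unfolding G10 by (simp add: algebra_simps)
    have Gs: "G1 s = -(\<alpha> *\<^sub>R g0) + (G1 s - G1 0)" unfolding G10 by simp
    have "g s \<bullet> G1 s \<le> 1/2 * b^2 * s^3 + 3/2 * \<alpha> * norm g0 * b * s^2 + (norm g0 * b + \<alpha>^2 * (norm g0)^2) * s - \<alpha> * (norm g0)^2"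
      by (subst gs, subst Gs, rule cubic_ineq[OF E3[OF sT] E1[OF sT] s(1) alpha_pos b0])
    thus ?thesis using True unfolding phi_def sq V0 by (simp add: algebra_simps)
  next
    case False
    have gs: "g s = g0 + (g s - g0)" by simp
    have "g s \<bullet> G1 s \<le> 1/2 * a * b * s^2 + (a^2 + b * norm g0) * s - \<alpha> * (norm g0)^2"
      by (subst gs, rule quad_ineq[OF _ _ E1[OF sT] G1bnd[OF sT] s(1) a0 b0])
        (use G10 E2[OF sT] g0_def in auto)
    thus ?thesis using False unfolding phi_def sq V0 by (simp add: algebra_simps)
  qed
  show ?thesis
    using dV bound unfolding Veq Vd a_def b_def v_def by blast
qed




lemma phi_mono:
  assumes "0 \<le> r" "r \<le> r'" "0 \<le> a" "0 \<le> b" "0 \<le> V" "0 < \<alpha>"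
  shows "phi c \<alpha> a b V r \<le> phi c \<alpha> a b V r'"
proof -
  have r2: "r^2 \<le> r'^2" and r3: "r^3 \<le> r'^3" using assms by (auto intro: power_mono)
  have sq: "0 \<le> sqrt (2*V)" using assms by simp
  have q1: "1/2 * b^2 * r^3 \<le> 1/2 * b^2 * r'^3" using r3 by (intro mult_left_mono) auto
  have q2: "3/2 * \<alpha> * sqrt (2*V) * b * r^2 \<le> 3/2 * \<alpha> * sqrt (2*V) * b * r'^2"
    using r2 assms sq by (intro mult_left_mono) auto
  have q3: "(sqrt (2*V) * b + 2 * \<alpha>^2 * V) * r \<le> (sqrt (2*V) * b + 2 * \<alpha>^2 * V) * r'"
    using assms sq by (intro mult_left_mono) auto
  have q4: "1/2 * a * b * r^2 \<le> 1/2 * a * b * r'^2" using r2 assms by (intro mult_left_mono) auto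
  have q5: "(a^2 + b * sqrt (2*V)) * r \<le> (a^2 + b * sqrt (2*V)) * r'" using assms sq by (intro mult_left_mono) auto
  show ?thesis unfolding phi_def by (cases c) (simp only: if_True if_False; use q1 q2 q3 q4 q5 in linarith)+
qed

lemma phi_le:
  assumes r: "0 \<le> r" "r \<le> 1" and a: "0 \<le> a" "a \<le> A" and b: "0 \<le> b" "b \<le> B"
    and V: "\<epsilon> \<le> V" "V \<le> Vm" "0 \<le> \<epsilon>" and al: "0 < \<alpha>"
  shows "phi c \<alpha> a b V r \<le> r * (1/2 * A * B + A^2 + B * sqrt (2*Vm) + 1/2 * B^2 + 3/2 * \<alpha> * sqrt (2*Vm) * B + sqrt (2*Vm) * B + 2 * \<alpha>^2 * Vm) - 2 * \<alpha> * \<epsilon>"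
proof -
  have r2: "r^2 \<le> r" and r3: "r^3 \<le> r" using r by (auto simp: power2_eq_square power3_eq_cube intro: mult_le_one order_trans[OF mult_right_le_one_le])
  have sq: "0 \<le> sqrt (2*V)" "sqrt (2*V) \<le> sqrt (2*Vm)" using V by auto
  have AB: "0 \<le> A" "0 \<le> B" using a b by auto
  have e: "2 * \<alpha> * \<epsilon> \<le> 2 * \<alpha> * V" using V al by simp
  have x1: "1/2 * a * b * r^2 \<le> r * (1/2 * A * B)"
  proof -
    have "a * b \<le> A * B" using a b by (intro mult_mono) auto
    hence "1/2 * a * b * r^2 \<le> 1/2 * A * B * r^2" using r by (intro mult_right_mono) auto
    also have "\<dots> \<le> 1/2 * A * B * r" using r2 AB by (intro mult_left_mono) auto
    finally show ?thesis by (simp add: mult.commute)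
  qed
  have x2: "(a^2 + b * sqrt (2*V)) * r \<le> r * (A^2 + B * sqrt (2*Vm))"
  proof -
    have "a^2 \<le> A^2" using a by (intro power_mono) auto
    moreover have "b * sqrt (2*V) \<le> B * sqrt (2*Vm)" using b sq by (intro mult_mono) auto
    ultimately show ?thesis using r by (simp add: mult.commute mult_left_mono)
  qed
  have x3: "1/2 * b^2 * r^3 \<le> r * (1/2 * B^2)"
  proof -
    have "b^2 \<le> B^2" using b by (intro power_mono) auto
    hence "1/2 * b^2 * r^3 \<le> 1/2 * B^2 * r^3" using r by (intro mult_right_mono) auto
    also have "\<dots> \<le> 1/2 * B^2 * r" using r3 by (intro mult_left_mono) auto
    finally show ?thesis by (simp add: mult.commute)
  qed
  have x4: "3/2 * \<alpha> * sqrt (2*V) * b * r^2 \<le> r * (3/2 * \<alpha> * sqrt (2*Vm) * B)"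
  proof -
    have "sqrt (2*V) * b \<le> sqrt (2*Vm) * B" using b sq by (intro mult_mono) auto
    hence "3/2 * \<alpha> * (sqrt (2*V) * b) \<le> 3/2 * \<alpha> * (sqrt (2*Vm) * B)" using al by (intro mult_left_mono) auto
    hence "3/2 * \<alpha> * (sqrt (2*V) * b) * r^2 \<le> 3/2 * \<alpha> * (sqrt (2*Vm) * B) * r^2" by (intro mult_right_mono) auto
    also have "\<dots> \<le> 3/2 * \<alpha> * (sqrt (2*Vm) * B) * r" using r2 AB al sq by (intro mult_left_mono) auto
    finally show ?thesis by (simp add: algebra_simps)
  qed
  have x5: "(sqrt (2*V) * b + 2 * \<alpha>^2 * V) * r \<le> r * (sqrt (2*Vm) * B + 2 * \<alpha>^2 * Vm)"
  proof -
    have "sqrt (2*V) * b \<le> sqrt (2*Vm) * B" using b sq by (intro mult_mono) auto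
    moreover have "2 * \<alpha>^2 * V \<le> 2 * \<alpha>^2 * Vm" using V by (intro mult_left_mono) auto
    ultimately show ?thesis using r by (simp add: mult.commute mult_left_mono)
  qed
  have n: "0 \<le> r * (1/2 * A * B)" "0 \<le> r * (A^2 + B * sqrt (2*Vm))" "0 \<le> r * (1/2 * B^2)"
      "0 \<le> r * (3/2 * \<alpha> * sqrt (2*Vm) * B)" "0 \<le> r * (sqrt (2*Vm) * B + 2 * \<alpha>^2 * Vm)"
    using r AB al V by auto
  have "phi c \<alpha> a b V r \<le> r * (1/2 * A * B) + r * (A^2 + B * sqrt (2*Vm)) + r * (1/2 * B^2)
      + r * (3/2 * \<alpha> * sqrt (2*Vm) * B) + r * (sqrt (2*Vm) * B + 2 * \<alpha>^2 * Vm) - 2 * \<alpha> * \<epsilon>"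
    unfolding phi_def by (cases c) (simp only: if_True if_False; use x1 x2 x3 x4 x5 n e in linarith)+
  thus ?thesis by (simp add: algebra_simps)
qed

lemma dec:
  fixes W \<phi> :: "real \<Rightarrow> real"
  assumes d: "\<And>r. r \<in> {0..\<tau>} \<Longrightarrow> \<exists>V'. (W has_real_derivative V') (at r within {0..\<tau>}) \<and> V' \<le> \<phi> r"
    and mono: "\<And>r r'. 0 \<le> r \<Longrightarrow> r \<le> r' \<Longrightarrow> \<phi> r \<le> \<phi> r'"
    and pq: "0 \<le> p" "p \<le> q" "q \<le> \<tau>"
  shows "W q - W p \<le> (q - p) * \<phi> q"
proof -
  obtain W' where W': "\<And>r. r \<in> {0..\<tau>} \<Longrightarrow> (W has_real_derivative W' r) (at r within {0..\<tau>}) \<and> W' r \<le> \<phi> r"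
    using d by metis
  have "\<exists>x\<in>{p..q}. W q - W p = (\<lambda>h. W' x * h) (q - p)"
  proof (rule mvt_very_simple[OF pq(2)])
    fix x assume x: "p \<le> x" "x \<le> q"
    hence "x \<in> {0..\<tau>}" using pq by auto
    hence "(W has_real_derivative W' x) (at x within {0..\<tau>})" using W' by blast
    hence "(W has_real_derivative W' x) (at x within {p..q})"
      by (rule DERIV_subset) (use pq in auto)
    thus "(W has_derivative (\<lambda>h. W' x * h)) (at x within {p..q})"
      by (simp add: has_field_derivative_def)
  qed
  then obtain x where x: "x \<in> {p..q}" "W q - W p = W' x * (q - p)" by auto
  have "W' x \<le> \<phi> q" using W'[of x] mono[of x q] x pq by auto
  thus ?thesis using x pq by (simp add: mult.commute mult_right_mono)
qed

theorem corollary1: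
  fixes f :: "(real^'n::finite) \<times> real \<Rightarrow> real"
    and Df :: "(real^'n) \<times> real \<Rightarrow> ((real^'n) \<times> real) \<Rightarrow>\<^sub>L real"
    and D2f :: "(real^'n) \<times> real \<Rightarrow> ((real^'n) \<times> real) \<Rightarrow>\<^sub>L ((real^'n) \<times> real) \<Rightarrow>\<^sub>L real"
    and D3f :: "(real^'n) \<times> real \<Rightarrow> ((real^'n) \<times> real) \<Rightarrow>\<^sub>L ((real^'n) \<times> real) \<Rightarrow>\<^sub>L ((real^'n) \<times> real) \<Rightarrow>\<^sub>L real"
    and m Cxx Cxt Cxxt Cxtt Cxxx \<alpha> :: real
    and x0 :: "real^'n"
    and cubic :: bool
    and xs :: "nat \<Rightarrow> real^'n"
    and ts :: "nat \<Rightarrow> real"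
  assumes C3: "C3_on (UNIV \<times> {0..}) f Df D2f D3f"
    and m_pos: "m > 0"
    and strong_conv: "\<And>x t v. t \<ge> 0 \<Longrightarrow> v \<bullet> (hessx D2f x t *v v) \<ge> m * (norm v)^2"
    and consts_pos: "Cxx > 0" "Cxt > 0" "Cxxt > 0" "Cxtt > 0" "Cxxx > 0"
    and bnd_xx: "\<And>x t. t \<ge> 0 \<Longrightarrow> specnorm (hessx D2f x t) \<le> Cxx"
    and bnd_xt: "\<And>x t. t \<ge> 0 \<Longrightarrow> norm (gradxt D2f x t) \<le> Cxt"
    and bnd_xxt: "\<And>x t. t \<ge> 0 \<Longrightarrow> specnorm (hessxt D3f x t) \<le> Cxxt"
    and bnd_xtt: "\<And>x t. t \<ge> 0 \<Longrightarrow> norm (gradxtt D3f x t) \<le> Cxtt"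
    and bnd_xxx: "\<And>x t i. t \<ge> 0 \<Longrightarrow> specnorm (hessxxx D3f x t i) \<le> Cxxx"
    and alpha_pos: "\<alpha> > 0"
    and t0: "ts 0 = 0"
    and x_0: "xs 0 = x0"
    and t_step: "\<And>k. ts k < ts (Suc k)"
    and t_root: "\<And>k. phi cubic \<alpha> (acoef Cxx Cxt (xdot Df D2f \<alpha> (xs k) (ts k)))
                        (bcoef Cxxx Cxxt Cxtt (xdot Df D2f \<alpha> (xs k) (ts k)))
                        (Vf Df (xs k) (ts k)) (ts (Suc k) - ts k) = 0"
    and t_least: "\<And>k s. ts k < s \<Longrightarrow> s < ts (Suc k) \<Longrightarrow>
                    phi cubic \<alpha> (acoef Cxx Cxt (xdot Df D2f \<alpha> (xs k) (ts k)))
                        (bcoef Cxxx Cxxt Cxtt (xdot Df D2f \<alpha> (xs k) (ts k)))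
                        (Vf Df (xs k) (ts k)) (s - ts k) \<noteq> 0"
    and x_step: "\<And>k. xs (Suc k) = xs k + (ts (Suc k) - ts k) *\<^sub>R xdot Df D2f \<alpha> (xs k) (ts k)"
    and V_pos: "\<And>k. Vf Df (xs k) (ts k) > 0"
  shows "\<forall>\<epsilon>>0. \<exists>k::nat. Vf Df (xs k) (ts k) < \<epsilon>"
  proof -
  define v where "v k = xdot Df D2f \<alpha> (xs k) (ts k)" for k
  define \<tau> where "\<tau> k = ts (Suc k) - ts k" for k
  define Vk where "Vk k = Vf Df (xs k) (ts k)" for k
  define ak where "ak k = acoef Cxx Cxt (v k)" for k
  define bk where "bk k = bcoef Cxxx Cxxt Cxtt (v k)" for k
  define W where "W k r = Vf Df (xs k + r *\<^sub>R v k) (ts k + r)" for k r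
  define \<phi> where "\<phi> k r = phi cubic \<alpha> (ak k) (bk k) (Vk k) r" for k r
  have cpos: "Cxx > 0" "Cxt > 0" "Cxxt > 0" "Cxtt > 0" "Cxxx > 0" using consts_pos by auto
  have tsnn: "ts k \<ge> 0" for k
  proof (induction k)
    case 0 thus ?case using t0 by simp
  next
    case (Suc k) thus ?case using t_step[of k] by linarith
  qed
  have \<tau>pos: "\<tau> k > 0" for k using t_step[of k] unfolding \<tau>_def by simp
  have ak0: "ak k \<ge> 0" for k unfolding ak_def acoef_def using cpos by simp
  have n1: "norm1 (v k) \<ge> 0" for k unfolding norm1_def by (simp add: sum_nonneg)
  have bk0: "bk k \<ge> 0" for k unfolding bk_def bcoef_def using cpos n1[of k] by simp
  have Vk0: "Vk k \<ge> 0" for k unfolding Vk_def Vf_def by simp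
  have mono: "\<phi> k r \<le> \<phi> k r'" if "0 \<le> r" "r \<le> r'" for k r r'
    unfolding \<phi>_def by (rule phi_mono[OF that ak0 bk0 Vk0 alpha_pos])
  have seg: "\<exists>V'. (W k has_real_derivative V') (at r within {0..\<tau> k}) \<and> V' \<le> \<phi> k r" if r: "r \<in> {0..\<tau> k}" for k r
  proof -
    have r': "0 \<le> r" "r \<le> \<tau> k" using r by auto
    have S: "\<exists>V'. ((\<lambda>s. Vf Df (xs k + s *\<^sub>R xdot Df D2f \<alpha> (xs k) (ts k)) (ts k + s)) has_real_derivative V') (at r within {0..\<tau> k})
           \<and> V' \<le> phi cubic \<alpha> (acoef Cxx Cxt (xdot Df D2f \<alpha> (xs k) (ts k))) (bcoef Cxxx Cxxt Cxtt (xdot Df D2f \<alpha> (xs k) (ts k))) (Vf Df (xs k) (ts k)) r"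
      by (rule segment[OF C3 m_pos strong_conv consts_pos bnd_xx bnd_xt bnd_xxt bnd_xtt bnd_xxx alpha_pos tsnn[of k] r'])
    from S show ?thesis unfolding W_def[abs_def] \<phi>_def ak_def bk_def v_def Vk_def by simp
  qed
  have W0: "W k 0 = Vk k" for k unfolding W_def Vk_def by simp
  have W\<tau>: "W k (\<tau> k) = Vk (Suc k)" for k unfolding W_def Vk_def \<tau>_def v_def using x_step[of k] by simp
  have root: "\<phi> k (\<tau> k) = 0" for k unfolding \<phi>_def ak_def bk_def Vk_def v_def \<tau>_def using t_root[of k] by simp
  have decr: "Vk (Suc k) \<le> Vk k" for k
  proof -
    have "W k (\<tau> k) - W k 0 \<le> (\<tau> k - 0) * \<phi> k (\<tau> k)"
      by (rule dec[OF seg mono]) (use \<tau>pos[of k] in auto)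
    thus ?thesis using W0 W\<tau> root by simp
  qed
  have Vle: "Vk k \<le> Vk 0" for k
  proof (induction k)
    case (Suc k) thus ?case using decr[of k] by linarith
  qed simp
  show ?thesis
  proof (rule allI, rule impI, rule ccontr)
    fix \<epsilon> :: real assume \<epsilon>: "\<epsilon> > 0" and nex: "\<not> (\<exists>k. Vf Df (xs k) (ts k) < \<epsilon>)"
    have geq: "\<epsilon> \<le> Vk k" for k using nex unfolding Vk_def by (meson not_le)
    define Vm where "Vm = Vk 0"
    define R where "R = sqrt (2 * Vm)"
    define Nv where "Nv = (\<alpha> * R + Cxt) / m"
    define A where "A = Cxx * Nv + Cxt"
    define B where "B = (Cxxx * (real CARD('n) * Nv) + 2 * Cxxt) * Nv + Cxtt"
    define K where "K = 1/2 * A * B + A^2 + B * sqrt (2*Vm) + 1/2 * B^2 + 3/2 * \<alpha> * sqrt (2*Vm) * B + sqrt (2*Vm) * B + 2 * \<alpha>^2 * Vm + 1"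
    define sst where "sst = min 1 (\<alpha> * \<epsilon> / K)"
    have Vmnn: "Vm \<ge> 0" unfolding Vm_def using Vk0 by simp
    have Rnn: "R \<ge> 0" unfolding R_def using Vmnn by simp
    have Nvnn: "Nv \<ge> 0" unfolding Nv_def using Rnn alpha_pos cpos m_pos by simp
    have Ann: "A \<ge> 0" unfolding A_def using Nvnn cpos by simp
    have Bnn: "B \<ge> 0" unfolding B_def using Nvnn cpos by simp
    have Kpos: "K > 0" unfolding K_def using Ann Bnn Vmnn alpha_pos by (simp add: add_nonneg_pos)
    have vbound: "norm (v k) \<le> Nv" for k
    proof -
      let ?H = "hessx D2f (xs k) (ts k)"
      let ?z = "\<alpha> *\<^sub>R gradx Df (xs k) (ts k) + gradxt D2f (xs k) (ts k)"
      have pd: "\<And>u. u \<bullet> (?H *v u) \<ge> m * (norm u)^2" using strong_conv tsnn by blast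
      have nv: "norm (v k) = norm (matrix_inv ?H *v ?z)" unfolding v_def xdot_def by simp
      have g: "norm (gradx Df (xs k) (ts k)) \<le> R"
      proof -
        have "norm (gradx Df (xs k) (ts k)) = sqrt (2 * Vk k)" unfolding Vk_def Vf_def by simp
        also have "\<dots> \<le> R" unfolding R_def Vm_def using Vle[of k] by simp
        finally show ?thesis .
      qed
      have "norm ?z \<le> \<alpha> * norm (gradx Df (xs k) (ts k)) + norm (gradxt D2f (xs k) (ts k))"
        using norm_triangle_ineq[of "\<alpha> *\<^sub>R gradx Df (xs k) (ts k)"] alpha_pos by simp
      also have "\<dots> \<le> \<alpha> * R + Cxt" using g bnd_xt[OF tsnn[of k]] alpha_pos
        by (intro add_mono mult_left_mono) auto
      finally have zb: "norm ?z \<le> \<alpha> * R + Cxt" .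
      have "m * norm (v k) \<le> norm ?z" unfolding nv by (rule hess_inv(2)[OF m_pos pd])
      hence "m * norm (v k) \<le> \<alpha> * R + Cxt" using zb by linarith
      thus ?thesis unfolding Nv_def using m_pos by (simp add: field_simps mult.commute)
    qed
    have aA: "ak k \<le> A" for k unfolding ak_def acoef_def A_def
      using vbound[of k] cpos by (simp add: mult_left_mono)
    have bB: "bk k \<le> B" for k
    proof -
      have "norm1 (v k) \<le> real CARD('n) * Nv"
        using order_trans[OF norm1_le mult_left_mono[OF vbound]] by simp
      hence "Cxxx * norm1 (v k) + 2 * Cxxt \<le> Cxxx * (real CARD('n) * Nv) + 2 * Cxxt"
        using cpos by (simp add: mult_left_mono)
      hence "(Cxxx * norm1 (v k) + 2 * Cxxt) * norm (v k) \<le> (Cxxx * (real CARD('n) * Nv) + 2 * Cxxt) * Nv"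
        using vbound[of k] n1[of k] cpos by (intro mult_mono) auto
      thus ?thesis unfolding bk_def bcoef_def B_def by simp
    qed
    have sst12: "0 < sst" "sst \<le> 1" unfolding sst_def using \<epsilon> alpha_pos Kpos by auto
    have "sst \<le> \<alpha> * \<epsilon> / K" unfolding sst_def by simp
    hence "sst * K \<le> \<alpha> * \<epsilon>" using Kpos by (simp add: field_simps)
    note sst = sst12 this
    have \<phi>sst: "\<phi> k sst \<le> - (\<alpha> * \<epsilon>)" for k
    proof -
      have "\<phi> k sst \<le> sst * (K - 1) - 2 * \<alpha> * \<epsilon>"
        unfolding \<phi>_def K_def
        using phi_le[OF _ sst(2) ak0 aA bk0 bB geq[of k] _ _ alpha_pos, of Vm] sst(1) Vle[of k] \<epsilon>
        unfolding Vm_def by simp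
      also have "\<dots> \<le> sst * K - 2 * \<alpha> * \<epsilon>" using sst(1) by (simp add: algebra_simps)
      finally show ?thesis using sst(3) by linarith
    qed
    have step: "Vk (Suc k) \<le> Vk k - \<alpha> * \<epsilon> * sst" for k
    proof -
      have lt: "sst < \<tau> k"
      proof (rule ccontr)
        assume "\<not> sst < \<tau> k"
        hence "\<phi> k (\<tau> k) \<le> \<phi> k sst" using mono[of "\<tau> k" sst k] \<tau>pos[of k] by simp
        thus False using root[of k] \<phi>sst[of k] \<epsilon> alpha_pos by (smt (verit) mult_pos_pos)
      qed
      have 1: "W k (\<tau> k) - W k sst \<le> (\<tau> k - sst) * \<phi> k (\<tau> k)"
        by (rule dec[OF seg mono]) (use lt sst in auto)
      have 2: "W k sst - W k 0 \<le> (sst - 0) * \<phi> k sst"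
        by (rule dec[OF seg mono]) (use lt sst in auto)
      have "sst * \<phi> k sst \<le> sst * (- (\<alpha> * \<epsilon>))" using \<phi>sst[of k] sst(1) by (intro mult_left_mono) auto
      thus ?thesis using 1 2 root[of k] W0[of k] W\<tau>[of k] by (simp add: algebra_simps)
    qed
    define c where "c = \<alpha> * \<epsilon> * sst"
    have cpos': "c > 0" unfolding c_def using alpha_pos \<epsilon> sst(1) by simp
    have lin: "Vk k \<le> Vk 0 - real k * c" for k
    proof (induction k)
      case (Suc k) thus ?case using step[of k] unfolding c_def by (simp add: algebra_simps)
    qed simp
    obtain n :: nat where n: "Vk 0 / c < real n" using reals_Archimedean2 by blast
    hence "Vk 0 < real n * c" using cpos' by (simp add: field_simps)
    hence "Vk n < 0" using lin[of n] by linarith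
    thus False using geq[of n] \<epsilon> by linarith
  qed
qed


end
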